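(* For every $k\ge 0$, as formal power series in $x$, $$\sum_{n} L(n,k)x^n=\sum_{n}L(n,n-k)x^n=\frac{x^k e_k(x)}{(1-x)^{k+1}(1+x)^k}.$$
   Context: $e(n,j)$ is the number of $j$-element subsets of $\{1,\dots,n\}$ with even sum (the empty set counts as even), and $e_k(x)=\sum_{j=0}^k e(k,j)x^j$. Losanitsch's triangle $(L(n,k))_{n,k\ge 0}$ is defined by $L(0,k)=[k=0]$, $L(1,k)=[k\le 1]$ for $k\ge0$, $L(n,k)=0$ for $k<0$, and for $n\ge 2$ and all $k$: $L(n,k)=L(n-2,k)+\binom{n-2}{k-1}+L(n-2,k-2)$, where $\binom{m}{j}=0$ for $j<0$ or $j>m$. The sums are over $n\ge 0$ (terms with $n-k<0$ or $n<k$ vanish). *)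

theory Defs
  imports Main "HOL-Computational_Algebra.Formal_Power_Series"
begin

definition e_cnt :: "nat \<Rightarrow> nat \<Rightarrow> nat" where
  "e_cnt n j = card {S. S \<subseteq> {1..n} \<and> card S = j \<and> even (\<Sum>S)}"

definition e_poly :: "nat \<Rightarrow> rat fps" where
  "e_poly k = (\<Sum>j=0..k. of_nat (e_cnt k j) * fps_X ^ j)"

definition binom_int :: "nat \<Rightarrow> int \<Rightarrow> nat" where
  "binom_int m j = (if j < 0 \<or> j > int m then 0 else m choose nat j)"

fun Los :: "nat \<Rightarrow> int \<Rightarrow> nat" where
  "Los 0 k = (if k = 0 then 1 else 0)"
| "Los (Suc 0) k = (if 0 \<le> k \<and> k \<le> 1 then 1 else 0)"
| "Los (Suc (Suc m)) k = Los m k + binom_int m (k - 1) + Los m (k - 2)"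

end

theory Submission
  imports Defs
begin


lemma Los_sym: "Los n (int n - j) = Los n j"
proof (induction n j rule: Los.induct)
  case (3 m k)
  have "binom_int m (int (Suc (Suc m)) - k - 1) = binom_int m (k - 1)"
  proof (cases "k - 1 < 0 \<or> k - 1 > int m")
    case True then show ?thesis by (auto simp: binom_int_def)
  next
    case False
    then obtain j where j: "k - 1 = int j" "j \<le> m" by (metis nat_0_le nat_le_iff not_le)
    then have e: "int (Suc (Suc m)) - k - 1 = int (m - j)" by simp
    show ?thesis unfolding e j(1) using j(2)
      by (simp only: binom_int_def) (auto simp: binomial_symmetric[of j m] nat_diff_distrib)
  qed
  then show ?case using 3 by (simp add: algebra_simps)
qed auto



definition A :: "nat \<Rightarrow> rat fps" where "A k = Abs_fps (\<lambda>n. of_nat (Los n (int k)))"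
definition B :: "nat \<Rightarrow> rat fps" where "B j = Abs_fps (\<lambda>n. of_nat (n choose j))"

lemma Los_neg: "k < 0 \<Longrightarrow> Los n k = 0"
  by (induction n k rule: Los.induct) (auto simp: binom_int_def)

lemma binom_int_nat: "binom_int n (int j) = n choose j"
  by (simp add: binom_int_def)

lemma B_rec: "B (Suc j) * (1 - fps_X) = fps_X * B j"
proof (rule fps_ext)
  fix n show "fps_nth (B (Suc j) * (1 - fps_X)) n = fps_nth (fps_X * B j) n"
    by (cases n) (simp_all add: B_def algebra_simps fps_X_mult_nth mult.commute[of _ fps_X])
qed

lemma B0: "B 0 * (1 - fps_X) = 1"
proof (rule fps_ext)
  fix n show "fps_nth (B 0 * (1 - fps_X)) n = fps_nth (1::rat fps) n"
    by (cases n) (simp_all add: B_def algebra_simps fps_X_mult_nth mult.commute[of _ fps_X])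
qed

lemma B_closed: "B j * (1 - fps_X) ^ (Suc j) = fps_X ^ j"
proof (induction j)
  case 0 then show ?case using B0 by simp
next
  case (Suc j)
  have "B (Suc j) * (1 - fps_X) ^ Suc (Suc j) = (B (Suc j) * (1 - fps_X)) * (1 - fps_X) ^ Suc j"
    by (simp add: algebra_simps)
  also have "\<dots> = fps_X * (B j * (1 - fps_X) ^ Suc j)" by (simp only: B_rec mult.assoc)
  also have "\<dots> = fps_X * fps_X ^ j" using Suc.IH by simp
  finally show ?case by simp
qed

lemma A_rec: "A (m+2) = fps_X^2 * A (m+2) + fps_X^2 * B (m+1) + fps_X^2 * A m"
proof (rule fps_ext)
  fix n
  show "fps_nth (A (m+2)) n = fps_nth (fps_X^2 * A (m+2) + fps_X^2 * B (m+1) + fps_X^2 * A m) n"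
  proof (cases n)
    case 0 then show ?thesis by (simp add: A_def fps_X_power_mult_nth)
  next
    case (Suc n1) note n1 = this
    show ?thesis
    proof (cases n1)
      case 0 then show ?thesis using n1 by (simp add: A_def fps_X_power_mult_nth)
    next
      case (Suc n2)
      have e: "int (m+2) - 1 = int (m+1)" "int (m+2) - 2 = int m" by simp_all
      have "Los (Suc (Suc n2)) (int (m+2)) = Los n2 (int (m+2)) + (n2 choose (m+1)) + Los n2 (int m)"
        by (simp only: Los.simps e binom_int_nat)
      then show ?thesis using n1 Suc
        by (simp add: A_def B_def fps_X_power_mult_nth)
    qed
  qed
qed

lemma A0: "A 0 = 1 + fps_X + fps_X^2 * A 0"
proof (rule fps_ext)
  fix n
  show "fps_nth (A 0) n = fps_nth (1 + fps_X + fps_X^2 * A 0) n"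
    by (cases n; cases "n - 1") (simp_all add: A_def fps_X_power_mult_nth binom_int_def Los_neg)
qed

lemma A1: "A 1 = fps_X + fps_X^2 * B 0 + fps_X^2 * A 1"
proof (rule fps_ext)
  fix n
  show "fps_nth (A 1) n = fps_nth (fps_X + fps_X^2 * B 0 + fps_X^2 * A 1) n"
    by (cases n; cases "n - 1") (simp_all add: A_def B_def fps_X_power_mult_nth binom_int_def Los_neg)
qed



definition Q :: "nat \<Rightarrow> rat fps \<Rightarrow> rat fps" where
  "Q k t = (\<Sum>S\<in>Pow {1..k}. t ^ (\<Sum>S) * fps_X ^ card S)"

lemma Q_Suc: "Q (Suc k) t = (1 + t ^ Suc k * fps_X) * Q k t"
proof -
  have P: "Pow {1..Suc k} = Pow {1..k} \<union> insert (Suc k) ` Pow {1..k}"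
    by (simp add: atLeastAtMostSuc_conv Pow_insert)
  have disj: "Pow {1..k} \<inter> insert (Suc k) ` Pow {1..k} = {}" by auto
  have inj: "inj_on (insert (Suc k)) (Pow {1..k})"
    by (rule inj_onI) (metis PowD atLeastAtMost_iff insert_ident not_less_eq_eq order_refl subsetD)
  have fin: "S \<in> Pow {1..k} \<Longrightarrow> finite S" for S by (auto intro: finite_subset)
  have nin: "S \<in> Pow {1..k} \<Longrightarrow> Suc k \<notin> S" for S by auto
  have "Q (Suc k) t = Q k t + (\<Sum>S\<in>insert (Suc k) ` Pow {1..k}. t ^ (\<Sum>S) * fps_X ^ card S)"
    unfolding Q_def P by (rule sum.union_disjoint) (auto simp: disj)
  also have "(\<Sum>S\<in>insert (Suc k) ` Pow {1..k}. t ^ (\<Sum>S) * fps_X ^ card S)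
      = (\<Sum>S\<in>Pow {1..k}. t ^ Suc k * fps_X * (t ^ (\<Sum>S) * fps_X ^ card S))"
    by (subst sum.reindex[OF inj]) (auto intro!: sum.cong simp: fin nin power_add algebra_simps)
  also have "\<dots> = t ^ Suc k * fps_X * Q k t" by (simp add: Q_def sum_distrib_left)
  finally show ?thesis by (simp add: algebra_simps)
qed

lemma e_Q: "2 * e_poly k = Q k 1 + Q k (-1)"
proof -
  define E where "E = {S. S \<subseteq> {1..k} \<and> even (\<Sum>S)}"
  have finE: "finite E" unfolding E_def by (rule finite_subset[of _ "Pow {1..k}"]) auto
  have cardE: "card ` E \<subseteq> {0..k}" unfolding E_def
    using card_mono[of "{1..k}"] by fastforce
  have "e_poly k = (\<Sum>j=0..k. \<Sum>S\<in>{S\<in>E. card S = j}. fps_X ^ card S)"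
  proof (unfold e_poly_def, rule sum.cong[OF refl])
    fix j
    have "{S\<in>E. card S = j} = {S. S \<subseteq> {1..k} \<and> card S = j \<and> even (\<Sum>S)}"
      unfolding E_def by auto
    then have "(\<Sum>S\<in>{S\<in>E. card S = j}. fps_X ^ card S) = (\<Sum>S\<in>{S\<in>E. card S = j}. (fps_X ^ j :: rat fps))"
      by (intro sum.cong) auto
    also have "\<dots> = of_nat (e_cnt k j) * fps_X ^ j"
      using \<open>{S\<in>E. card S = j} = _\<close> by (simp add: e_cnt_def)
    finally show "of_nat (e_cnt k j) * fps_X ^ j = (\<Sum>S\<in>{S\<in>E. card S = j}. (fps_X ^ card S :: rat fps))" by simp
  qed
  also have "\<dots> = (\<Sum>S\<in>E. fps_X ^ card S)"
    by (rule sum.group[OF finE _ cardE]) simp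
  also have "\<dots> = (\<Sum>S\<in>Pow {1..k}. if even (\<Sum>S) then fps_X ^ card S else 0)"
  proof -
    have "E = {S\<in>Pow {1..k}. even (\<Sum>S)}" unfolding E_def by auto
    then show ?thesis by (simp only:) (rule sum.inter_filter, simp)
  qed
  finally have "2 * e_poly k = (\<Sum>S\<in>Pow {1..k}. 2 * (if even (\<Sum>S) then fps_X ^ card S else 0))"
    by (simp add: sum_distrib_left)
  also have "\<dots> = (\<Sum>S\<in>Pow {1..k}. 1 ^ (\<Sum>S) * fps_X ^ card S + (-1) ^ (\<Sum>S) * fps_X ^ card S)"
    by (rule sum.cong[OF refl]) (auto simp: neg_one_even_power neg_one_odd_power)
  also have "\<dots> = Q k 1 + Q k (-1)" by (simp add: Q_def sum.distrib)
  finally show ?thesis .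
qed



lemma alg_step:
  fixes x a b am em e2 c :: "'a::comm_ring_1"
  assumes ha: "c * a = x^2 * b + x^2 * am"
    and hb: "b * (1 - x) ^ (m+2) = x ^ (m+1)"
    and hm: "am * ((1 - x) ^ (m+1) * (1 + x) ^ m) = x ^ m * em"
    and hc: "c = 1 - x^2"
    and he: "e2 = x * (1 + x) ^ (m+1) + c * em"
  shows "c * (a * ((1 - x) ^ (m+2+1) * (1 + x) ^ (m+2))) = c * (x ^ (m+2) * e2)"
proof -
  have D1: "(1 - x) ^ (m+2+1) * (1 + x) ^ (m+2) = (1 - x) ^ (m+2) * ((1 - x) * (1 + x) ^ (m+2))"
    by (simp add: algebra_simps)
  have D2: "(1 - x) ^ (m+2+1) * (1 + x) ^ (m+2) = ((1 - x) ^ (m+1) * (1 + x) ^ m) * (c * c)"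
    by (simp add: hc algebra_simps power2_eq_square)
  have "c * (a * ((1 - x) ^ (m+2+1) * (1 + x) ^ (m+2)))
      = x^2 * (b * ((1 - x) ^ (m+2+1) * (1 + x) ^ (m+2))) + x^2 * (am * ((1 - x) ^ (m+2+1) * (1 + x) ^ (m+2)))"
    by (metis (no_types, lifting) ha distrib_right mult.assoc)
  also have "\<dots> = x^2 * (x ^ (m+1) * ((1 - x) * (1 + x) ^ (m+2))) + x^2 * (x ^ m * em * (c * c))"
  proof -
    have "b * ((1 - x) ^ (m+2+1) * (1 + x) ^ (m+2)) = x ^ (m+1) * ((1 - x) * (1 + x) ^ (m+2))"
      unfolding D1 hb[symmetric] by (simp add: mult.assoc)
    moreover have "am * ((1 - x) ^ (m+2+1) * (1 + x) ^ (m+2)) = x ^ m * em * (c * c)"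
      unfolding D2 hm[symmetric] by (simp add: mult.assoc)
    ultimately show ?thesis by simp
  qed
  also have "\<dots> = c * (x ^ (m+2) * e2)"
    by (simp add: he hc algebra_simps power2_eq_square)
  finally show ?thesis .
qed


lemma Q0: "Q 0 t = 1"
  by (simp add: Q_def)

lemma G_closed: "Q k 1 = (1 + fps_X) ^ k"
  by (induction k) (simp_all add: Q0 Q_Suc)

lemma H2: "Q (Suc (Suc m)) (-1) = (1 - fps_X^2) * Q m (-1)"
proof -
  have "(1 + (-1::rat fps) ^ Suc (Suc m) * fps_X) * (1 + (-1) ^ Suc m * fps_X) = 1 - fps_X^2"
    by (cases "even m") (simp_all add: algebra_simps power2_eq_square)
  then show ?thesis by (simp add: Q_Suc mult.assoc)
qed

lemma two_cancel: "(2::rat fps) * a = 2 * b \<Longrightarrow> a = b"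
proof -
  have "(2::rat fps) \<noteq> 0"
  proof
    assume "(2::rat fps) = 0"
    then have "fps_nth (2::rat fps) 0 = 0" by simp
    then show False by (simp add: numeral_fps_const)
  qed
  then show "(2::rat fps) * a = 2 * b \<Longrightarrow> a = b" by simp
qed

lemma e_rec: "e_poly (m+2) = fps_X * (1 + fps_X) ^ (m+1) + (1 - fps_X^2) * e_poly m"
proof (rule two_cancel)
  have e2: "2 * e_poly (m+2) = (1 + fps_X) ^ (m+2) + (1 - fps_X^2) * Q m (-1)"
    using e_Q[of "m+2"] H2[of m] by (simp add: G_closed)
  have em: "2 * e_poly m = (1 + fps_X) ^ m + Q m (-1)"
    using e_Q[of m] by (simp add: G_closed)
  have p: "(1 + fps_X) ^ (m+2) = 2 * (fps_X * (1 + fps_X) ^ (m+1)) + (1 - fps_X^2) * ((1 + fps_X :: rat fps) ^ m)"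
    by (simp add: algebra_simps power2_eq_square)
  have "2 * (fps_X * (1 + fps_X) ^ (m+1) + (1 - fps_X^2) * e_poly m)
      = 2 * (fps_X * (1 + fps_X) ^ (m+1)) + (1 - fps_X^2) * (2 * e_poly m)"
    by (simp add: algebra_simps)
  also have "\<dots> = 2 * (fps_X * (1 + fps_X) ^ (m+1)) + (1 - fps_X^2) * ((1 + fps_X) ^ m + Q m (-1))"
    by (simp only: em)
  also have "\<dots> = (1 + fps_X) ^ (m+2) + (1 - fps_X^2) * Q m (-1)"
    by (simp only: p distrib_left add.assoc)
  finally show "2 * e_poly (m+2) = 2 * (fps_X * (1 + fps_X) ^ (m+1) + (1 - fps_X^2) * e_poly m)"
    using e2 by simp
qed

lemma e0: "e_poly 0 = 1"
  by (rule two_cancel) (simp add: e_Q Q0)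

lemma e1: "e_poly 1 = 1"
  by (rule two_cancel) (simp add: e_Q Q_Suc[of 0, simplified] Q0)

lemma c_nz: "(1 - fps_X^2 :: rat fps) \<noteq> 0"
proof
  assume "(1 - fps_X^2 :: rat fps) = 0"
  then have "fps_nth (1 - fps_X^2 :: rat fps) 0 = 0" by simp
  then show False by simp
qed

lemma main_id: "A k * ((1 - fps_X) ^ (k+1) * (1 + fps_X) ^ k) = fps_X ^ k * e_poly k"
proof (induction k rule: less_induct)
  case (less k)
  define c :: "rat fps" where "c = 1 - fps_X^2"
  have cnz: "c \<noteq> 0" using c_nz by (simp add: c_def)
  show ?case
  proof (cases k)
    case 0
    have "c * A 0 = 1 + fps_X" unfolding c_def using A0 by (simp add: algebra_simps)
    then have "c * (A 0 * ((1 - fps_X) ^ (0+1) * (1 + fps_X) ^ 0)) = (1 + fps_X) * (1 - fps_X)"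
      by (simp add: mult.assoc[symmetric])
    also have "\<dots> = c * (fps_X ^ 0 * e_poly 0)"
      by (simp add: e0 c_def algebra_simps power2_eq_square)
    finally have "c * (A 0 * ((1 - fps_X) ^ (0+1) * (1 + fps_X) ^ 0)) = c * (fps_X ^ 0 * e_poly 0)" .
    then show ?thesis using 0 cnz by simp
  next
    case (Suc k1)
    show ?thesis
    proof (cases k1)
      case 0
      have h: "c * A 1 = fps_X + fps_X^2 * B 0" unfolding c_def using A1 by (simp add: algebra_simps)
      have "c * (A 1 * ((1 - fps_X) ^ (1+1) * (1 + fps_X) ^ 1))
          = (fps_X + fps_X^2 * B 0) * ((1 - fps_X) ^ (1+1) * (1 + fps_X))"
        by (simp only: mult.assoc[symmetric] h) simp
      also have "\<dots> = fps_X * ((1 - fps_X) ^ 2 * (1 + fps_X)) + fps_X^2 * (1 + fps_X) * (B 0 * (1 - fps_X)) * (1 - fps_X)"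
        by (simp add: algebra_simps power2_eq_square)
      also have "\<dots> = c * (fps_X ^ 1 * e_poly 1)"
        by (simp only: B0 e1 mult_1_right) (simp add: c_def algebra_simps power2_eq_square)
      finally show ?thesis using Suc 0 cnz by simp
    next
      case (Suc m)
      then have k: "k = m + 2" using \<open>k = Suc k1\<close> by simp
      have ha: "c * A (m+2) = fps_X^2 * B (m+1) + fps_X^2 * A m"
        using A_rec[of m] unfolding c_def by (simp add: algebra_simps)
      have hb: "B (m+1) * (1 - fps_X) ^ (m+2) = fps_X ^ (m+1)" using B_closed[of "m+1"] by simp
      have hm: "A m * ((1 - fps_X) ^ (m+1) * (1 + fps_X) ^ m) = fps_X ^ m * e_poly m"
        using less k by simp
      have "c * (A (m+2) * ((1 - fps_X) ^ (m+2+1) * (1 + fps_X) ^ (m+2))) = c * (fps_X ^ (m+2) * e_poly (m+2))"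
        by (rule alg_step[OF ha hb hm c_def]) (simp only: e_rec c_def)
      then show ?thesis using k cnz by simp
    qed
  qed
qed

theorem proposition3p3:
  fixes k :: nat
  shows "Abs_fps (\<lambda>n. of_nat (Los n (int k)) :: rat) = Abs_fps (\<lambda>n. of_nat (Los n (int n - int k)))
       \<and> Abs_fps (\<lambda>n. of_nat (Los n (int n - int k)) :: rat)
           = fps_X ^ k * e_poly k / ((1 - fps_X) ^ (k + 1) * (1 + fps_X) ^ k)"
proof -
  have sym: "Abs_fps (\<lambda>n. of_nat (Los n (int n - int k)) :: rat) = A k"
    by (simp add: A_def Los_sym)
  have Dnz: "((1 - fps_X) ^ (k + 1) * (1 + fps_X) ^ k :: rat fps) \<noteq> 0"
  proof
    assume "((1 - fps_X) ^ (k + 1) * (1 + fps_X) ^ k :: rat fps) = 0"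
    then have "fps_nth ((1 - fps_X) ^ (k + 1) * (1 + fps_X) ^ k :: rat fps) 0 = 0" by simp
    then show False by (simp add: fps_mult_nth_0 fps_nth_power_0)
  qed
  have "fps_X ^ k * e_poly k / ((1 - fps_X) ^ (k + 1) * (1 + fps_X) ^ k) = A k"
    unfolding main_id[symmetric] using Dnz by simp
  then show ?thesis using sym by (simp add: A_def)
qed

end
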